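(* Consider the weighted-bins process with unit-weight balls and an $(\alpha,\beta)$-biased distribution $\mathcal D$ with $\alpha,\beta>1$, and let $0<\epsilon\le\frac{2\ln\left(\frac{\alpha\beta-1}{\alpha\beta-\beta}\right)}{\ln\left(\frac{\alpha\beta-1}{\alpha-1}\right)}-1$. Then for every $t\ge0$, $\mathrm{Gap}_{1+\epsilon}(t)$ stochastically dominates $\mathrm{Gap}(t)$, i.e., $\Pr[\mathrm{Gap}_{1+\epsilon}(t)\le b]\le\Pr[\mathrm{Gap}(t)\le b]$ for all real $b$.
   Context: Weighted balls into weighted bins: $n$ bins with positive integer weights $N_1,\dots,N_n$, $N=\sum_iN_i$; $\mathcal D$ on $[n]$ is $(\alpha,\beta)$-biased: $\frac{N_i}{\alpha N}\le\Pr_{\mathcal D}[i]\le\frac{\beta N_i}{N}$. Each round, two bins are sampled independently from $\mathcal D$ and a unit-weight ball is placed in the sampled bin with smaller value $v_i(t-1)=w_i(t-1)/N_i$ ($w_i(t)$ = number of balls in bin $i$ after round $t$); $\mathrm{Gap}(t)=\max_iv_i(t)-\min_jv_j(t)$. The $(1+\epsilon)$-choice process with $N$ bins: unit-weight balls are thrown into $N$ unit-size bins; at each step, with the bins sorted by load in nonincreasing order, the ball is placed into one of the $i$ most loaded bins with probability $\phi_i=(i/N)^{1+\epsilon}$ (so the $i$-th most loaded bin receives it with probability $\phi_i-\phi_{i-1}$, $\phi_0=0$). $\mathrm{Gap}_{1+\epsilon}(t)$ is the difference between the maximum and minimum bin load of this process after $t$ steps (both processes start empty). *)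

theory Defs
  imports "HOL-Probability.Probability_Mass_Function"
begin

text \<open>Bins are indexed by 0..<n; Nw i is the (positive integer) weight of bin i;
  a state w gives the number of balls in each bin.\<close>

definition val :: "(nat \<Rightarrow> nat) \<Rightarrow> (nat \<Rightarrow> nat) \<Rightarrow> nat \<Rightarrow> real" where
  "val Nw w i = real (w i) / real (Nw i)"

definition wgap :: "nat \<Rightarrow> (nat \<Rightarrow> nat) \<Rightarrow> (nat \<Rightarrow> nat) \<Rightarrow> real" where
  "wgap n Nw w = Max (val Nw w ` {..<n}) - Min (val Nw w ` {..<n})"

definition valid_sel :: "(nat \<Rightarrow> nat) \<Rightarrow> ((nat \<Rightarrow> nat) \<Rightarrow> nat \<Rightarrow> nat \<Rightarrow> nat) \<Rightarrow> bool" where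
  "valid_sel Nw sel \<longleftrightarrow> (\<forall>w i j. sel w i j \<in> {i, j} \<and>
      (val Nw w i < val Nw w j \<longrightarrow> sel w i j = i) \<and>
      (val Nw w j < val Nw w i \<longrightarrow> sel w i j = j))"

definition wstep :: "nat pmf \<Rightarrow> ((nat \<Rightarrow> nat) \<Rightarrow> nat \<Rightarrow> nat \<Rightarrow> nat) \<Rightarrow> (nat \<Rightarrow> nat) \<Rightarrow> (nat \<Rightarrow> nat) pmf" where
  "wstep D sel w = bind_pmf D (\<lambda>i. bind_pmf D (\<lambda>j.
      (let k = sel w i j in return_pmf (w(k := Suc (w k))))))"

primrec wproc :: "nat pmf \<Rightarrow> ((nat \<Rightarrow> nat) \<Rightarrow> nat \<Rightarrow> nat \<Rightarrow> nat) \<Rightarrow> nat \<Rightarrow> (nat \<Rightarrow> nat) pmf" where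
  "wproc D sel 0 = return_pmf (\<lambda>_. 0)"
| "wproc D sel (Suc t) = bind_pmf (wproc D sel t) (wstep D sel)"

definition biased :: "nat \<Rightarrow> (nat \<Rightarrow> nat) \<Rightarrow> real \<Rightarrow> real \<Rightarrow> nat pmf \<Rightarrow> bool" where
  "biased n Nw \<alpha> \<beta> D \<longleftrightarrow> set_pmf D \<subseteq> {..<n} \<and>
     (\<forall>i<n. real (Nw i) / (\<alpha> * real (\<Sum>j<n. Nw j)) \<le> pmf D i \<and>
            pmf D i \<le> \<beta> * real (Nw i) / real (\<Sum>j<n. Nw j))"

definition phi :: "nat \<Rightarrow> real \<Rightarrow> nat \<Rightarrow> real" where
  "phi N eps i = (real i / real N) powr (1 + eps)"

text \<open>Rank k (0-based, i.e. the (k+1)-th most loaded bin) is chosen with probability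
  phi (k+1) - phi k.\<close>

definition rank_pmf :: "nat \<Rightarrow> real \<Rightarrow> nat pmf" where
  "rank_pmf N eps = embed_pmf (\<lambda>k. if k < N then phi N eps (Suc k) - phi N eps k else 0)"

definition sorted_bins :: "nat \<Rightarrow> (nat \<Rightarrow> nat) \<Rightarrow> nat list" where
  "sorted_bins N x = sort_key (\<lambda>i. - int (x i)) [0..<N]"

definition estep :: "nat \<Rightarrow> real \<Rightarrow> (nat \<Rightarrow> nat) \<Rightarrow> (nat \<Rightarrow> nat) pmf" where
  "estep N eps x = map_pmf (\<lambda>k. let b = sorted_bins N x ! k in x(b := Suc (x b))) (rank_pmf N eps)"

primrec eproc :: "nat \<Rightarrow> real \<Rightarrow> nat \<Rightarrow> (nat \<Rightarrow> nat) pmf" where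
  "eproc N eps 0 = return_pmf (\<lambda>_. 0)"
| "eproc N eps (Suc t) = bind_pmf (eproc N eps t) (estep N eps)"

definition egap :: "nat \<Rightarrow> (nat \<Rightarrow> nat) \<Rightarrow> real" where
  "egap N x = real (Max (x ` {..<N})) - real (Min (x ` {..<N}))"

end

theory Submission
  imports Defs "HOL-Probability.Product_PMF"
begin

definition prof :: "nat \<Rightarrow> (nat\<Rightarrow>nat) \<Rightarrow> (nat\<Rightarrow>nat) \<Rightarrow> int \<Rightarrow> int" where
 "prof n Nw w c = (\<Sum>i<n. max 0 (int (w i) - c * int (Nw i)))"
definition dd :: "(int\<Rightarrow>int) \<Rightarrow> int \<Rightarrow> int" where "dd P c = P (c-1) - P c"
definition ind :: "(int\<Rightarrow>int) \<Rightarrow> nat \<Rightarrow> int \<Rightarrow> int" where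
  "ind P k c = (if int k + 1 \<le> dd P c then 1 else 0)"
definition good :: "((int\<Rightarrow>int)\<Rightarrow>real) \<Rightarrow> bool" where
  "good f \<longleftrightarrow> (\<forall>P Q. (\<forall>c. P c \<le> Q c) \<longrightarrow> f P \<le> f Q) \<and> (\<forall>P. 0 \<le> f P \<and> f P \<le> 1)"

lemma term_inc: "max 0 (a+1-y) - max 0 (a - y) = (if y \<le> a then 1 else (0::int))"
  by auto

definition tt :: "int \<Rightarrow> int \<Rightarrow> int \<Rightarrow> int" where
  "tt a N c = max 0 (a - (c-1)*N) - max 0 (a - c*N)"

lemma tt_alt: "tt a N c = max 0 (a - c*N + N) - max 0 (a - c*N)"
  unfolding tt_def by (simp add: algebra_simps)

lemma tt1: "c*N \<le> a \<Longrightarrow> 0 \<le> N \<Longrightarrow> tt a N c = N"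
  unfolding tt_alt by auto
lemma tt2: "0 \<le> N \<Longrightarrow> 0 \<le> tt a N c \<and> tt a N c \<le> N"
  unfolding tt_alt by auto
lemma tt4: assumes "a \<le> (c-1)*N" "0 \<le> N" shows "tt a N c = 0"
proof -
  have "a \<le> c*N - N" using assms(1) by (simp add: algebra_simps)
  then show ?thesis using assms(2) unfolding tt_alt by auto
qed
lemma tt3: assumes "c \<le> c'" "0 \<le> N" shows "tt a N c' \<le> tt a N c"
proof -
  have "c*N \<le> c'*N" using assms by (simp add: mult_right_mono)
  have gen: "\<And>y y'::int. y \<le> y' \<Longrightarrow> max 0 (a - y' + N) - max 0 (a - y') \<le> max 0 (a-y+N) - max 0 (a-y)"
    using assms(2) by (auto simp: max_def)
  show ?thesis unfolding tt_alt by (rule gen) fact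
qed

lemma dd_prof: "dd (prof n Nw w) c = (\<Sum>i<n. tt (int (w i)) (int (Nw i)) c)"
  unfolding dd_def prof_def tt_def by (simp add: sum_subtractf)

lemma prof_upd: assumes "k < n" "Nw k > 0"
  shows "prof n Nw (w(k := Suc (w k))) c = prof n Nw w c + (if c * int (Nw k) \<le> int (w k) then 1 else 0)"
proof -
  have "prof n Nw (w(k := Suc (w k))) c = (\<Sum>i<n. max 0 (int (w i) - c * int (Nw i))) +
      (max 0 (int (w k)+1 - c * int (Nw k)) - max 0 (int (w k) - c * int (Nw k)))"
    using assms(1) unfolding prof_def
    by (simp add: sum.remove[of "{..<n}" k] algebra_simps)
  then show ?thesis using term_inc unfolding prof_def by simp
qed



lemma sb_basic: "length (sorted_bins N x) = N" "distinct (sorted_bins N x)" "set (sorted_bins N x) = {..<N}"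
  "sorted (map (\<lambda>i. - int (x i)) (sorted_bins N x))"
  unfolding sorted_bins_def by (auto simp: length_sort distinct_sort sorted_sort_key)

lemma sb_mono: assumes "i \<le> j" "j < N" shows "x (sorted_bins N x ! j) \<le> x (sorted_bins N x ! i)"
proof -
  have "map (\<lambda>i. - int (x i)) (sorted_bins N x) ! i \<le> map (\<lambda>i. - int (x i)) (sorted_bins N x) ! j"
    using sb_basic(4)[of x N] assms sb_basic(1)[of N x] by (auto simp: sorted_iff_nth_mono)
  then show ?thesis using assms sb_basic(1)[of N x] by simp
qed

lemma sb_in: "k < N \<Longrightarrow> sorted_bins N x ! k < N"
  using sb_basic(1,3)[of N x] nth_mem by (metis lessThan_iff)

lemma sb_prop: assumes "k < N"
  shows "(c \<le> int (x (sorted_bins N x ! k))) \<longleftrightarrow> int k + 1 \<le> int (card {j. j < N \<and> c \<le> int (x j)})"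
proof
  let ?L = "sorted_bins N x"
  have inj: "inj_on (\<lambda>i. ?L ! i) {..<N}"
    using sb_basic(1,2)[of N x] by (simp add: inj_on_def nth_eq_iff_index_eq)
  assume h: "c \<le> int (x (?L ! k))"
  have sub: "(\<lambda>i. ?L ! i) ` {..k} \<subseteq> {j. j < N \<and> c \<le> int (x j)}"
  proof
    fix j assume "j \<in> (\<lambda>i. ?L ! i) ` {..k}"
    then obtain i where i: "i \<le> k" "j = ?L ! i" by auto
    have "x (?L ! k) \<le> x (?L ! i)" using sb_mono[OF i(1) assms] .
    then show "j \<in> {j. j < N \<and> c \<le> int (x j)}" using i h sb_in[of i N x] assms by auto
  qed
  have "card ((\<lambda>i. ?L ! i) ` {..k}) = k + 1"
    using inj assms by (subst card_image) (auto intro: inj_on_subset)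
  then have "k + 1 \<le> card {j. j < N \<and> c \<le> int (x j)}"
    using card_mono[OF _ sub] by simp
  then show "int k + 1 \<le> int (card {j. j < N \<and> c \<le> int (x j)})" by simp
next
  let ?L = "sorted_bins N x"
  assume h: "int k + 1 \<le> int (card {j. j < N \<and> c \<le> int (x j)})"
  show "c \<le> int (x (?L ! k))"
  proof (rule ccontr)
    assume nc: "\<not> c \<le> int (x (?L ! k))"
    have sub: "{j. j < N \<and> c \<le> int (x j)} \<subseteq> (\<lambda>i. ?L ! i) ` {..<k}"
    proof
      fix j assume j: "j \<in> {j. j < N \<and> c \<le> int (x j)}"
      then have "j \<in> set ?L" using sb_basic(3)[of N x] by auto
      then obtain i where i: "i < N" "j = ?L ! i" using sb_basic(1)[of N x] by (metis in_set_conv_nth)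
      have "i < k"
      proof (rule ccontr)
        assume "\<not> i < k"
        then have "x (?L ! i) \<le> x (?L ! k)" using sb_mono[of k i N x] i by auto
        then show False using nc j i by auto
      qed
      then show "j \<in> (\<lambda>i. ?L ! i) ` {..<k}" using i by auto
    qed
    have "card {j. j < N \<and> c \<le> int (x j)} \<le> card ((\<lambda>i. ?L ! i) ` {..<k})"
      by (rule card_mono) (use sub in auto)
    also have "\<dots> \<le> k" using card_image_le[of "{..<k}"] by simp
    finally show False using h by simp
  qed
qed



lemma tt_one: "tt a 1 c = (if c \<le> a then 1 else 0)"
  unfolding tt_def by auto

lemma dd_profB: "dd (prof N (\<lambda>_. 1) x) c = int (card {j. j < N \<and> c \<le> int (x j)})"
proof -
  have "dd (prof N (\<lambda>_. 1) x) c = (\<Sum>j<N. if c \<le> int (x j) then 1 else 0)"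
    unfolding dd_prof by (simp add: tt_one)
  also have "\<dots> = (\<Sum>j\<in>{j\<in>{..<N}. c \<le> int (x j)}. 1)"
    by (rule sum.inter_filter[symmetric]) simp
  also have "{j\<in>{..<N}. c \<le> int (x j)} = {j. j < N \<and> c \<le> int (x j)}" by auto
  finally show ?thesis by simp
qed

lemma profB_step: assumes "k < N"
  shows "prof N (\<lambda>_. 1) (let b = sorted_bins N x ! k in x(b := Suc (x b)))
     = (\<lambda>c. prof N (\<lambda>_. 1) x c + ind (prof N (\<lambda>_. 1) x) k c)"
proof
  fix c
  let ?b = "sorted_bins N x ! k"
  have "prof N (\<lambda>_. 1) (x(?b := Suc (x ?b))) c = prof N (\<lambda>_. 1) x c + (if c \<le> int (x ?b) then 1 else 0)"
    using prof_upd[of ?b N "\<lambda>_. 1" x c] sb_in[OF assms] by simp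
  moreover have "(c \<le> int (x ?b)) = (int k + 1 \<le> dd (prof N (\<lambda>_. 1) x) c)"
    using sb_prop[OF assms] dd_profB by simp
  ultimately show "prof N (\<lambda>_. 1) (let b = ?b in x(b := Suc (x b))) c = prof N (\<lambda>_. 1) x c + ind (prof N (\<lambda>_. 1) x) k c"
    unfolding ind_def Let_def by simp
qed

lemma phi0: "phi N eps 0 = 0" by (simp add: phi_def)
lemma phiN: "N > 0 \<Longrightarrow> phi N eps N = 1" by (simp add: phi_def)
lemma phi_mono: assumes "i \<le> j" "eps > 0" shows "phi N eps i \<le> phi N eps j"
  unfolding phi_def using assms by (intro powr_mono2) (auto intro: divide_right_mono)

lemma rank_pmf: assumes "N > 0" "eps > 0"
  shows "pmf (rank_pmf N eps) k = (if k < N then phi N eps (Suc k) - phi N eps k else 0)"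
proof -
  let ?f = "\<lambda>k. if k < N then phi N eps (Suc k) - phi N eps k else 0"
  have nn: "\<And>k. 0 \<le> ?f k" using phi_mono[OF _ assms(2)] by auto
  have "(\<integral>\<^sup>+x. ennreal (?f x) \<partial>count_space UNIV) = (\<Sum>x<N. ennreal (?f x))"
    by (rule nn_integral_count_space') auto
  also have "\<dots> = ennreal (\<Sum>x<N. ?f x)" by (subst sum_ennreal) (auto intro: phi_mono[OF _ assms(2)])
  also have "(\<Sum>x<N. ?f x) = (\<Sum>x<N. phi N eps (Suc x) - phi N eps x)" by simp
  also have "\<dots> = 1" by (subst sum_lessThan_telescope) (simp add: phi0 phiN assms)
  finally show ?thesis unfolding rank_pmf_def using nn by (subst pmf_embed_pmf) auto
qed

lemma rank_set: assumes "N > 0" "eps > 0" shows "set_pmf (rank_pmf N eps) \<subseteq> {..<N}"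
  using rank_pmf[OF assms] by (auto simp: set_pmf_eq)

lemma rank_prob: assumes "N > 0" "eps > 0" "K \<le> N"
  shows "measure_pmf.prob (rank_pmf N eps) {k. k < N \<and> K \<ge> k + 1} = phi N eps K"
proof -
  have "{k. k < N \<and> K \<ge> k + 1} = {..<K}" using assms(3) by auto
  then have "measure_pmf.prob (rank_pmf N eps) {k. k < N \<and> K \<ge> k + 1} = (\<Sum>k<K. pmf (rank_pmf N eps) k)"
    by (simp add: measure_measure_pmf_finite)
  also have "\<dots> = (\<Sum>k<K. phi N eps (Suc k) - phi N eps k)"
    using assms by (intro sum.cong) (auto simp: rank_pmf)
  also have "\<dots> = phi N eps K" by (subst sum_lessThan_telescope) (simp add: phi0)
  finally show ?thesis .
qed



lemma int_le_div_iff: assumes "0 < (b::int)" shows "(c \<le> a div b) = (c * b \<le> a)"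
proof
  assume "c \<le> a div b"
  then have "c * b \<le> (a div b) * b" using assms by (simp add: mult_right_mono)
  also have "\<dots> \<le> a" using div_mult_mod_eq[of a b] pos_mod_sign[OF assms, of a] by linarith
  finally show "c * b \<le> a" .
next
  assume "c * b \<le> a"
  then have "(c*b) div b \<le> a div b" using assms by (rule zdiv_mono1)
  then show "c \<le> a div b" using assms by simp
qed

context
  fixes n :: nat and Nw :: "nat \<Rightarrow> nat" and w :: "nat \<Rightarrow> nat"
  assumes Npos: "\<And>i. i < n \<Longrightarrow> Nw i > 0"
begin

lemma dd_mono: "c \<le> c' \<Longrightarrow> dd (prof n Nw w) c' \<le> dd (prof n Nw w) c"
  unfolding dd_prof by (intro sum_mono tt3) auto

lemma dd_nonpos: "c \<le> 0 \<Longrightarrow> dd (prof n Nw w) c = int (\<Sum>i<n. Nw i)"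
proof -
  assume c: "c \<le> 0"
  have "\<And>i. tt (int (w i)) (int (Nw i)) c = int (Nw i)"
  proof -
    fix i have "c * int (Nw i) \<le> 0" using c by (simp add: mult_nonpos_nonneg)
    then show "tt (int (w i)) (int (Nw i)) c = int (Nw i)" by (intro tt1) auto
  qed
  then show ?thesis unfolding dd_prof by simp
qed

lemma dd_big: "int (\<Sum>i<n. w i) < c \<Longrightarrow> dd (prof n Nw w) c = 0"
proof -
  assume c: "int (\<Sum>i<n. w i) < c"
  have "\<And>i. i < n \<Longrightarrow> tt (int (w i)) (int (Nw i)) c = 0"
  proof -
    fix i assume i: "i < n"
    have "w i \<le> (\<Sum>i<n. w i)" using i by (intro member_le_sum) auto
    then have "int (w i) \<le> c - 1" using c by linarith
    also have "\<dots> = (c - 1) * 1" by simp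
    also have "\<dots> \<le> (c - 1) * int (Nw i)" using Npos[OF i] \<open>int (w i) \<le> c - 1\<close>
      by (intro mult_left_mono) auto
    finally show "tt (int (w i)) (int (Nw i)) c = 0" by (intro tt4) auto
  qed
  then show ?thesis unfolding dd_prof by simp
qed

lemma dd_bounds: "0 \<le> dd (prof n Nw w) c \<and> dd (prof n Nw w) c \<le> int (\<Sum>i<n. Nw i)"
  unfolding dd_prof using tt2 by (auto intro: sum_nonneg order.trans[OF sum_mono[of _ _ "\<lambda>i. int (Nw i)"]])

lemma dd_H: "int (\<Sum>i\<in>{i. i<n \<and> int m * int (Nw i) \<le> int (w i)}. Nw i) \<le> dd (prof n Nw w) (int m)"
proof -
  let ?H = "{i. i<n \<and> int m * int (Nw i) \<le> int (w i)}"
  have "int (\<Sum>i\<in>?H. Nw i) = (\<Sum>i\<in>?H. tt (int (w i)) (int (Nw i)) (int m))"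
    by (simp add: tt1)
  also have "\<dots> \<le> (\<Sum>i<n. tt (int (w i)) (int (Nw i)) (int m))"
    by (rule sum_mono2) (auto simp: tt2)
  finally show ?thesis unfolding dd_prof .
qed

lemma lev_iff: "i < n \<Longrightarrow> (c * int (Nw i) \<le> int (w i)) \<longleftrightarrow> c \<le> int (w i div Nw i)"
proof -
  assume i: "i < n"
  have "(0::int) < int (Nw i)" using Npos[OF i] by simp
  then have "(c \<le> int (w i) div int (Nw i)) = (c * int (Nw i) \<le> int (w i))"
    by (rule int_le_div_iff)
  then show ?thesis by (simp add: zdiv_int)
qed

lemma mu_ex: assumes "k < (\<Sum>i<n. Nw i)"
  shows "\<exists>\<mu>. \<mu> \<le> (\<Sum>i<n. w i) \<and> (\<forall>c. (int k + 1 \<le> dd (prof n Nw w) c) \<longleftrightarrow> c \<le> int \<mu>)"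
proof -
  let ?U = "\<Sum>i<n. w i"
  let ?S = "{m. m \<le> ?U \<and> int k + 1 \<le> dd (prof n Nw w) (int m)}"
  have fin: "finite ?S" by simp
  have "int k + 1 \<le> int (sum Nw {..<n})" using assms by linarith
  then have "0 \<in> ?S" using dd_nonpos[of 0] by simp
  then have ne: "?S \<noteq> {}" by auto
  define \<mu> where "\<mu> = Max ?S"
  have mS: "\<mu> \<in> ?S" unfolding \<mu>_def using fin ne by (rule Max_in)
  show ?thesis
  proof (intro exI conjI allI)
    show "\<mu> \<le> ?U" using mS by simp
    fix c
    show "(int k + 1 \<le> dd (prof n Nw w) c) \<longleftrightarrow> c \<le> int \<mu>"
    proof
      assume h: "int k + 1 \<le> dd (prof n Nw w) c"
      show "c \<le> int \<mu>"
      proof (rule ccontr)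
        assume nc: "\<not> c \<le> int \<mu>"
        then have "c \<ge> 0" by simp
        then obtain m where m: "c = int m" by (metis nonneg_eq_int)
        have "\<not> int ?U < c" using h dd_big[of c] by auto
        then have "m \<le> ?U" using m by (simp only: not_less of_nat_le_iff)
        then have "m \<in> ?S" using h m by auto
        then have "m \<le> \<mu>" unfolding \<mu>_def using fin by simp
        then show False using nc m by simp
      qed
    next
      assume "c \<le> int \<mu>"
      then have "dd (prof n Nw w) (int \<mu>) \<le> dd (prof n Nw w) c" by (rule dd_mono)
      then show "int k + 1 \<le> dd (prof n Nw w) c" using mS by simp
    qed
  qed
qed

end


lemma analytic:
  fixes a b e x p :: real
  assumes a: "a > 1" and b: "b > 1" and e0: "0 < e"
    and e1: "e \<le> 2 * ln ((a * b - 1) / (a * b - b)) / ln ((a * b - 1) / (a - 1)) - 1"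
    and x: "0 \<le> x" "x \<le> 1" and p: "p \<le> b * x" "p \<le> 1 - (1 - x) / a"
  shows "p \<le> x powr ((1 + e) / 2)"
proof -
  define g where "g = (1 + e) / 2"
  define L where "L = ln ((a * b - 1) / (a - 1))"
  define xs where "xs = (a - 1) / (a * b - 1)"
  have ab: "a * b > a" using a b by simp
  have ab1: "a * b - 1 > a - 1" using ab by simp
  have "(a*b-1)/(a-1) > 1" using ab1 a by (simp add: field_simps)
  then have L0: "L > 0" unfolding L_def by simp
  have "(a * b - 1) / (a * b - b) = ((a * b - 1) / (a - 1)) / b"
    using a b by (simp add: field_simps)
  moreover have "ln (((a * b - 1) / (a - 1)) / b) = L - ln b"
    unfolding L_def using \<open>(a*b-1)/(a-1) > 1\<close> b by (subst ln_div) auto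
  ultimately have lnr: "ln ((a * b - 1) / (a * b - b)) = L - ln b" by metis
  have "e \<le> 2 * (L - ln b) / L - 1" using e1 lnr unfolding L_def by simp
  then have "e * L \<le> (2 * (L - ln b) / L - 1) * L" using L0 by (simp add: mult_right_mono)
  also have "\<dots> = L - 2 * ln b" using L0 by (simp add: field_simps)
  finally have key0: "ln b \<le> (1 - g) * L" unfolding g_def by (simp add: algebra_simps field_simps)
  have lnb: "ln b > 0" using b by simp
  have "0 < (1-g)*L" using key0 lnb by linarith
  then have "0 < 1 - g" using L0 by (simp add: zero_less_mult_iff)
  then have g1: "g \<le> 1" by simp
  have g0: "g > 0" unfolding g_def using e0 by simp
  have d0: "a * b - 1 > 0" using ab1 a by linarith
  have xs0: "0 < xs" "xs < 1" unfolding xs_def using a ab1 d0 by (auto simp: divide_less_eq)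
  have lnxs: "ln xs = - L" unfolding xs_def L_def using a ab1 by (simp add: ln_div)
  have K: "b * xs \<le> xs powr g"
  proof -
    have "ln (b * xs) = ln b + ln xs" using b xs0 by (simp add: ln_mult)
    also have "\<dots> \<le> ln (xs powr g)" using key0 lnxs by (simp add: algebra_simps)
    finally show ?thesis using b xs0 by (subst (asm) ln_le_cancel_iff) auto
  qed
  have bxs: "b * xs = (a - 1 + xs) / a" unfolding xs_def using a d0 by (simp add: field_simps)
  show ?thesis
  proof (cases "x \<le> xs")
    case True
    show ?thesis
    proof (cases "x = 0")
      case True then show ?thesis using p by simp
    next
      case False
      then have x0: "x > 0" using x by simp
      have "xs powr (g - 1) \<le> x powr (g - 1)" using g1 x0 True by (intro powr_mono2') auto
      have "b \<le> xs powr (g - 1)"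
      proof -
        have "xs powr g = xs * xs powr (g - 1)" using xs0 by (simp add: powr_mult_base)
        then show ?thesis using K xs0 by (simp add: mult.commute)
      qed
      then have "b * x \<le> x powr (g - 1) * x"
        using \<open>xs powr (g - 1) \<le> x powr (g - 1)\<close> x0 by (intro mult_right_mono) auto
      also have "\<dots> = x powr g" using x0 by (simp add: powr_mult_base mult.commute)
      finally show ?thesis using p unfolding g_def by simp
    qed
  next
    case False
    define l where "l = (x - xs) / (1 - xs)"
    have l: "0 \<le> l" "l \<le> 1" unfolding l_def using False xs0 x by (auto simp: field_simps)
    have lx: "l * (1 - xs) = x - xs" unfolding l_def using xs0 by simp
    have "(1 - l) * ((a - 1 + xs) / a) + l = (a - 1 + xs) / a + l * (1 - xs) / a"
      using a by (simp add: field_simps)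
    also have "\<dots> = (a - 1 + x) / a" unfolding lx using a by (simp add: field_simps)
    finally have lin: "(a - 1 + x) / a = (1 - l) * ((a - 1 + xs) / a) + l" by simp
    have cv: "convex_on {0<..} (\<lambda>y. y powr (1 / g))" using g0 g1 by (intro powr_convex) (simp add: field_simps)
    define y1 where "y1 = xs powr g"
    have y1: "y1 > 0" unfolding y1_def using xs0 by simp
    have "((1 - l) *\<^sub>R y1 + l *\<^sub>R 1) powr (1 / g) \<le> (1 - l) * y1 powr (1/g) + l * 1 powr (1/g)"
      using convex_onD[OF cv, of l y1 1] l y1 by simp
    also have "y1 powr (1/g) = xs" unfolding y1_def using g0 xs0 by (simp add: powr_powr)
    also have "(1 - l) * xs + l * 1 powr (1/g) = x" using lx by (simp add: algebra_simps)
    finally have c1: "((1 - l) * y1 + l) powr (1 / g) \<le> x" by simp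
    have pos: "0 \<le> (1 - l) * y1 + l" using l y1 by simp
    have "(1 - l) * y1 + l = (((1 - l) * y1 + l) powr (1 / g)) powr g"
      using pos g0 by (simp add: powr_powr)
    also have "\<dots> \<le> x powr g" using c1 g0 pos by (intro powr_mono2) auto
    finally have c2: "(1 - l) * y1 + l \<le> x powr g" .
    have "p \<le> (a - 1 + x) / a" using p(2) a by (simp add: field_simps)
    also have "\<dots> \<le> (1 - l) * y1 + l" unfolding lin y1_def using K bxs l
      by (intro add_right_mono mult_left_mono) auto
    finally show ?thesis using c2 unfolding g_def by simp
  qed
qed



lemma layer: fixes z U :: nat and F :: "nat \<Rightarrow> real" assumes "z \<le> U"
  shows "F z = F 0 + (\<Sum>m<U. (F (Suc m) - F m) * (if Suc m \<le> z then 1 else 0))"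
proof -
  have "(\<Sum>m<U. (F (Suc m) - F m) * (if Suc m \<le> z then 1 else 0)) = (\<Sum>m<U. if Suc m \<le> z then F (Suc m) - F m else 0)"
    by (intro sum.cong) auto
  also have "\<dots> = (\<Sum>m\<in>{m\<in>{..<U}. Suc m \<le> z}. F (Suc m) - F m)"
    by (rule sum.inter_filter[symmetric]) simp
  also have "{m\<in>{..<U}. Suc m \<le> z} = {..<z}" using assms by auto
  also have "(\<Sum>m<z. F (Suc m) - F m) = F z - F 0" by (rule sum_lessThan_telescope)
  finally show ?thesis by simp
qed

lemma prob_ge: fixes p :: "nat pmf" assumes "set_pmf p \<subseteq> {..U}"
  shows "measure_pmf.prob p {Suc m..} = (\<Sum>z\<le>U. pmf p z * (if Suc m \<le> z then 1 else 0))"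
proof -
  have "measure_pmf.prob p {Suc m..} = measure_pmf.prob p ({Suc m..} \<inter> {..U})"
  proof -
    have "{Suc m..} \<inter> set_pmf p = ({Suc m..} \<inter> {..U}) \<inter> set_pmf p" using assms by auto
    then show ?thesis by (metis measure_Int_set_pmf)
  qed
  also have "\<dots> = (\<Sum>z\<in>{z\<in>{..U}. Suc m \<le> z}. pmf p z)"
    by (subst measure_measure_pmf_finite) (auto intro: sum.cong)
  also have "\<dots> = (\<Sum>z\<le>U. if Suc m \<le> z then pmf p z else 0)"
    by (rule sum.inter_filter) simp
  also have "\<dots> = (\<Sum>z\<le>U. pmf p z * (if Suc m \<le> z then 1 else 0))"
    by (intro sum.cong) auto
  finally show ?thesis .
qed

lemma exp_layer: fixes p :: "nat pmf" and F :: "nat \<Rightarrow> real" assumes "set_pmf p \<subseteq> {..U}"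
  shows "measure_pmf.expectation p F = F 0 + (\<Sum>m<U. (F (Suc m) - F m) * measure_pmf.prob p {Suc m..})"
proof -
  have "measure_pmf.expectation p F = (\<Sum>z\<le>U. F z * pmf p z)"
    using assms by (intro integral_measure_pmf_real) auto
  also have "\<dots> = (\<Sum>z\<le>U. pmf p z * (F 0 + (\<Sum>m<U. (F (Suc m) - F m) * (if Suc m \<le> z then 1 else 0))))"
    by (intro sum.cong refl) (subst layer[of _ U F], auto)
  also have "\<dots> = F 0 * (\<Sum>z\<le>U. pmf p z) + (\<Sum>m<U. (F (Suc m) - F m) * (\<Sum>z\<le>U. pmf p z * (if Suc m \<le> z then 1 else 0)))"
    by (simp add: algebra_simps sum.distrib sum_distrib_left sum_distrib_right sum.swap[of _ "{..U}"])
  also have "(\<Sum>z\<le>U. pmf p z) = 1" using assms by (intro sum_pmf_eq_1) auto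
  finally show ?thesis using prob_ge[OF assms] by simp
qed

lemma dom: fixes p q :: "nat pmf" and F :: "nat \<Rightarrow> real"
  assumes "mono F" "set_pmf p \<subseteq> {..U}" "set_pmf q \<subseteq> {..U}"
    and "\<And>m. m < U \<Longrightarrow> measure_pmf.prob p {Suc m..} \<le> measure_pmf.prob q {Suc m..}"
  shows "measure_pmf.expectation p F \<le> measure_pmf.expectation q F"
  unfolding exp_layer[OF assms(2)] exp_layer[OF assms(3)]
  using assms(1,4) by (intro add_left_mono sum_mono mult_left_mono) (auto simp: mono_def)



lemma wstep_pair: "wstep D sel w = map_pmf (\<lambda>(i,j). let k = sel w i j in w(k := Suc (w k))) (pair_pmf D D)"
  by (simp add: wstep_def pair_pmf_def map_bind_pmf map_return_pmf Let_def)

definition hh :: "nat \<Rightarrow> real \<Rightarrow> ((int\<Rightarrow>int)\<Rightarrow>real) \<Rightarrow> (int\<Rightarrow>int) \<Rightarrow> real" where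
  "hh N eps f P = measure_pmf.expectation (rank_pmf N eps) (\<lambda>k. f (\<lambda>c. P c + ind P k c))"

lemma sel_H:
  assumes vs: "valid_sel Nw sel" and Npos: "\<And>i. i < n \<Longrightarrow> Nw i > 0"
    and ij: "i < n" "j < n" and m: "m \<le> w (sel w i j) div Nw (sel w i j)"
  shows "m \<le> w i div Nw i \<and> m \<le> w j div Nw j"
proof -
  have lt: "val Nw w a < val Nw w b" if "a < n" "b < n" "w a div Nw a < w b div Nw b" for a b
  proof -
    have "real (w a) / real (Nw a) < real (w a div Nw a) + 1"
    proof -
      have "w a = Nw a * (w a div Nw a) + w a mod Nw a" by simp
      moreover have "w a mod Nw a < Nw a" using Npos[OF that(1)] by simp
      ultimately have "real (w a) < real (Nw a) * (real (w a div Nw a) + 1)"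
        by (metis (no_types, lifting) add.commute add_less_mono1 distrib_left mult.right_neutral of_nat_add of_nat_less_iff of_nat_mult)
      then show ?thesis using Npos[OF that(1)] by (simp add: field_simps)
    qed
    also have "\<dots> \<le> real (w b div Nw b)" using that(3) by linarith
    also have "\<dots> \<le> real (w b) / real (Nw b)"
    proof -
      have "(w b div Nw b) * Nw b \<le> w b" by (rule div_times_less_eq_dividend)
      then have "real (w b div Nw b) * real (Nw b) \<le> real (w b)" by (metis of_nat_le_iff of_nat_mult)
      then show ?thesis using Npos[OF that(2)] by (simp add: le_divide_eq)
    qed
    finally show ?thesis unfolding val_def .
  qed
  have s: "sel w i j \<in> {i, j}" and s1: "val Nw w i < val Nw w j \<longrightarrow> sel w i j = i"
    and s2: "val Nw w j < val Nw w i \<longrightarrow> sel w i j = j"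
    using vs unfolding valid_sel_def by blast+
  show ?thesis
  proof (cases "sel w i j = i")
    case True
    then have mi: "m \<le> w i div Nw i" using m by simp
    show ?thesis
    proof (rule conjI[OF mi], rule ccontr)
      assume "\<not> m \<le> w j div Nw j"
      then have "w j div Nw j < w i div Nw i" using mi by simp
      then have "sel w i j = j" using lt[OF ij(2,1)] s2 by blast
      then have "i = j" using True by simp
      then show False using \<open>\<not> m \<le> w j div Nw j\<close> mi by simp
    qed
  next
    case False
    then have sj: "sel w i j = j" using s by auto
    then have mj: "m \<le> w j div Nw j" using m by simp
    show ?thesis
    proof (rule conjI[OF _ mj], rule ccontr)
      assume "\<not> m \<le> w i div Nw i"
      then have "w i div Nw i < w j div Nw j" using mj by simp
      then have "sel w i j = i" using lt[OF ij] s1 by blast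
      then show False using False by simp
    qed
  qed
qed



locale wloc =
  fixes n :: nat and Nw :: "nat \<Rightarrow> nat" and D :: "nat pmf"
    and \<alpha> \<beta> \<epsilon> :: real and sel :: "(nat \<Rightarrow> nat) \<Rightarrow> nat \<Rightarrow> nat \<Rightarrow> nat"
  assumes n1: "n \<ge> 1"
    and Npos: "\<And>i. i < n \<Longrightarrow> Nw i > 0"
    and a1: "\<alpha> > 1" and b1: "\<beta> > 1"
    and bias: "biased n Nw \<alpha> \<beta> D"
    and vs: "valid_sel Nw sel"
    and e0: "0 < \<epsilon>"
    and e1: "\<epsilon> \<le> 2 * ln ((\<alpha> * \<beta> - 1) / (\<alpha> * \<beta> - \<beta>)) / ln ((\<alpha> * \<beta> - 1) / (\<alpha> - 1)) - 1"
begin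

abbreviation "Ntot \<equiv> (\<Sum>i<n. Nw i)"

lemma Ntot_pos: "Ntot > 0"
proof -
  have "Nw 0 \<le> Ntot" using n1 by (intro member_le_sum) auto
  then show ?thesis using Npos[of 0] n1 by simp
qed

lemma Dset: "set_pmf D \<subseteq> {..<n}" using bias unfolding biased_def by simp

lemma Dlo: "i < n \<Longrightarrow> real (Nw i) / (\<alpha> * real Ntot) \<le> pmf D i"
  using bias unfolding biased_def by simp
lemma Dhi: "i < n \<Longrightarrow> pmf D i \<le> \<beta> * real (Nw i) / real Ntot"
  using bias unfolding biased_def by simp

lemma probH: fixes H assumes H: "H \<subseteq> {..<n}"
  shows "measure_pmf.prob D H \<le> (real (\<Sum>i\<in>H. Nw i) / real Ntot) powr ((1 + \<epsilon>) / 2)"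
proof -
  have fH: "finite H" using H finite_subset by blast
  let ?x = "real (\<Sum>i\<in>H. Nw i) / real Ntot"
  have NT: "real Ntot > 0" using Ntot_pos by (simp only: of_nat_0_less_iff)
  have MH: "(\<Sum>i\<in>H. Nw i) \<le> Ntot" using H by (intro sum_mono2) auto
  have pH: "measure_pmf.prob D H = (\<Sum>i\<in>H. pmf D i)" using fH by (rule measure_measure_pmf_finite)
  have MH': "real (\<Sum>i\<in>H. Nw i) \<le> real Ntot" using MH by (simp only: of_nat_le_iff)
  have x: "0 \<le> ?x" "?x \<le> 1" using MH' NT by (auto simp del: of_nat_sum intro: divide_nonneg_nonneg)
  have p1: "measure_pmf.prob D H \<le> \<beta> * ?x"
  proof -
    have "(\<Sum>i\<in>H. pmf D i) \<le> (\<Sum>i\<in>H. \<beta> * real (Nw i) / real Ntot)"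
      using H by (intro sum_mono Dhi) auto
    also have "\<dots> = \<beta> * ?x" by (simp add: sum_divide_distrib sum_distrib_left)
    finally show ?thesis using pH by simp
  qed
  have p2: "measure_pmf.prob D H \<le> 1 - (1 - ?x) / \<alpha>"
  proof -
    have s1: "(\<Sum>i<n. pmf D i) = 1" using Dset by (intro sum_pmf_eq_1) auto
    have split: "(\<Sum>i<n. pmf D i) = (\<Sum>i\<in>H. pmf D i) + (\<Sum>i\<in>{..<n}-H. pmf D i)"
      using H by (metis finite_lessThan sum.subset_diff add.commute)
    have "(\<Sum>i\<in>{..<n}-H. real (Nw i) / (\<alpha> * real Ntot)) \<le> (\<Sum>i\<in>{..<n}-H. pmf D i)"
      by (intro sum_mono Dlo) auto
    moreover have "(\<Sum>i\<in>{..<n}-H. real (Nw i) / (\<alpha> * real Ntot)) = (1 - ?x) / \<alpha>"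
    proof -
      have "real Ntot = real (\<Sum>i\<in>H. Nw i) + real (\<Sum>i\<in>{..<n}-H. Nw i)"
        using H by (metis finite_lessThan sum.subset_diff add.commute of_nat_add)
      then have "real (\<Sum>i\<in>{..<n}-H. Nw i) = real Ntot - real (\<Sum>i\<in>H. Nw i)" by simp
      have "(\<Sum>i\<in>{..<n}-H. real (Nw i) / (\<alpha> * real Ntot)) = real (\<Sum>i\<in>{..<n}-H. Nw i) / (\<alpha> * real Ntot)"
        by (simp add: sum_divide_distrib[symmetric])
      also have "\<dots> = (real Ntot - real (\<Sum>i\<in>H. Nw i)) / (\<alpha> * real Ntot)"
        using \<open>real (\<Sum>i\<in>{..<n}-H. Nw i) = real Ntot - real (\<Sum>i\<in>H. Nw i)\<close> by (simp only:)
      also have "\<dots> = ((real Ntot - real (\<Sum>i\<in>H. Nw i)) / real Ntot) / \<alpha>"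
        by (simp only: divide_divide_eq_left mult.commute)
      also have "(real Ntot - real (\<Sum>i\<in>H. Nw i)) / real Ntot = 1 - ?x"
        using NT by (simp only: diff_divide_distrib divide_self)
      finally show ?thesis .
    qed
    ultimately show ?thesis using pH s1 split by simp
  qed
  show ?thesis using analytic[OF a1 b1 e0 e1 x p1 p2] by simp
qed


lemma stepA: assumes gf: "good f"
  shows "measure_pmf.expectation (wstep D sel w) (\<lambda>w'. f (prof n Nw w')) \<le> hh Ntot \<epsilon> f (prof n Nw w)"
proof -
  define P where "P = prof n Nw w"
  define U where "U = (\<Sum>i<n. w i)"
  define lev where "lev k = w k div Nw k" for k
  define F where "F m = f (\<lambda>c. P c + (if c \<le> int m then 1 else 0))" for m
  have monoF: "mono F" unfolding F_def mono_def using gf unfolding good_def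
    by (intro allI impI) (auto)
  define pA where "pA = map_pmf (\<lambda>(i,j). lev (sel w i j)) (pair_pmf D D)"
  have selin: "sel w i j < n" if "i < n" "j < n" for i j
    using vs that unfolding valid_sel_def by (metis insert_iff singletonD)
  have LHS: "measure_pmf.expectation (wstep D sel w) (\<lambda>w'. f (prof n Nw w')) = measure_pmf.expectation pA F"
  proof -
    have eqf: "prof n Nw (w(sel w i j := Suc (w (sel w i j)))) = (\<lambda>c. P c + (if c \<le> int (lev (sel w i j)) then 1 else 0))"
      if ij: "i < n" "j < n" for i j
    proof
      fix c
      let ?k = "sel w i j"
      have k: "?k < n" using selin ij by simp
      show "prof n Nw (w(?k := Suc (w ?k))) c = P c + (if c \<le> int (lev ?k) then 1 else 0)"
        using prof_upd[of ?k n Nw w c, OF k Npos[OF k]] lev_iff[where n=n and Nw=Nw and w=w and i="?k" and c=c, OF Npos k]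
        unfolding P_def lev_def by simp
    qed
    have "map_pmf (prof n Nw) (wstep D sel w) = map_pmf (\<lambda>(i,j). \<lambda>c. P c + (if c \<le> int (lev (sel w i j)) then 1 else 0)) (pair_pmf D D)"
      unfolding wstep_pair map_pmf_comp
      by (intro map_pmf_cong refl) (use Dset eqf in \<open>auto simp: Let_def\<close>)
    also have "\<dots> = map_pmf (\<lambda>m c. P c + (if c \<le> int m then 1 else 0)) pA"
      unfolding pA_def map_pmf_comp by (simp add: case_prod_unfold)
    finally have "map_pmf (prof n Nw) (wstep D sel w) = map_pmf (\<lambda>m c. P c + (if c \<le> int m then 1 else 0)) pA" .
    then have "measure_pmf.expectation (map_pmf (prof n Nw) (wstep D sel w)) f =
               measure_pmf.expectation (map_pmf (\<lambda>m c. P c + (if c \<le> int m then 1 else 0)) pA) f" by simp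
    then show ?thesis unfolding F_def by simp
  qed
  have "\<forall>k. \<exists>m. k < Ntot \<longrightarrow> m \<le> U \<and> (\<forall>c. (int k + 1 \<le> dd P c) \<longleftrightarrow> c \<le> int m)"
  proof
    fix k show "\<exists>m. k < Ntot \<longrightarrow> m \<le> U \<and> (\<forall>c. (int k + 1 \<le> dd P c) \<longleftrightarrow> c \<le> int m)"
    proof (cases "k < Ntot")
      case True then show ?thesis using mu_ex[OF Npos True, of w] unfolding P_def U_def by blast
    qed simp
  qed
  then have "\<exists>\<mu>. \<forall>k. k < Ntot \<longrightarrow> \<mu> k \<le> U \<and> (\<forall>c. (int k + 1 \<le> dd P c) \<longleftrightarrow> c \<le> int (\<mu> k))"
    by (rule choice)
  then obtain \<mu> where mu: "\<And>k. k < Ntot \<Longrightarrow> \<mu> k \<le> U \<and> (\<forall>c. (int k + 1 \<le> dd P c) \<longleftrightarrow> c \<le> int (\<mu> k))"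
    by blast
  define pB where "pB = map_pmf \<mu> (rank_pmf Ntot \<epsilon>)"
  have rs: "set_pmf (rank_pmf Ntot \<epsilon>) \<subseteq> {..<Ntot}" using rank_set[OF Ntot_pos e0] .
  have RHS: "hh Ntot \<epsilon> f P = measure_pmf.expectation pB F"
  proof -
    have "map_pmf (\<lambda>k c. P c + ind P k c) (rank_pmf Ntot \<epsilon>) = map_pmf (\<lambda>m c. P c + (if c \<le> int m then 1 else 0)) pB"
    proof -
      have eqk: "(\<lambda>c. P c + ind P k c) = (\<lambda>c. P c + (if c \<le> int (\<mu> k) then 1 else 0))" if k: "k < Ntot" for k
        using mu[OF k] unfolding ind_def by auto
      show ?thesis unfolding pB_def map_pmf_comp
        by (intro map_pmf_cong refl) (use rs eqk in auto)
    qed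
    then have "measure_pmf.expectation (map_pmf (\<lambda>k c. P c + ind P k c) (rank_pmf Ntot \<epsilon>)) f =
               measure_pmf.expectation (map_pmf (\<lambda>m c. P c + (if c \<le> int m then 1 else 0)) pB) f" by simp
    then show ?thesis unfolding F_def hh_def by simp
  qed
  have setA: "set_pmf pA \<subseteq> {..U}"
  proof
    fix m assume "m \<in> set_pmf pA"
    then obtain i j where ij: "i \<in> set_pmf D" "j \<in> set_pmf D" "m = lev (sel w i j)" unfolding pA_def by auto
    then have k: "sel w i j < n" using Dset selin by auto
    have "lev (sel w i j) \<le> w (sel w i j)" unfolding lev_def by simp
    also have "\<dots> \<le> U" unfolding U_def using k by (intro member_le_sum) auto
    finally show "m \<in> {..U}" using ij by simp
  qed
  have setB: "set_pmf pB \<subseteq> {..U}" unfolding pB_def using rs mu by auto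
  have probs: "measure_pmf.prob pA {Suc m..} \<le> measure_pmf.prob pB {Suc m..}" for m
  proof -
    define H where "H = {i. i < n \<and> Suc m \<le> lev i}"
    have Hsub: "H \<subseteq> {..<n}" unfolding H_def by auto
    define K where "K = nat (dd P (int (Suc m)))"
    have ddb: "0 \<le> dd P (int (Suc m)) \<and> dd P (int (Suc m)) \<le> int Ntot"
      using dd_bounds[where n=n and Nw=Nw and w=w, OF Npos] unfolding P_def by blast
    have KN: "K \<le> Ntot" unfolding K_def using ddb by linarith
    have "measure_pmf.prob pA {Suc m..} = measure_pmf.prob (pair_pmf D D) {ij. Suc m \<le> lev (sel w (fst ij) (snd ij))}"
      unfolding pA_def by (simp add: case_prod_beta vimage_def)
    also have "\<dots> \<le> measure_pmf.prob (pair_pmf D D) (H \<times> H)"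
    proof -
      have "{ij. Suc m \<le> lev (sel w (fst ij) (snd ij))} \<inter> set_pmf (pair_pmf D D) \<subseteq> H \<times> H"
      proof
        fix ij assume a: "ij \<in> {ij. Suc m \<le> lev (sel w (fst ij) (snd ij))} \<inter> set_pmf (pair_pmf D D)"
        then obtain i j where ij: "ij = (i,j)" "i < n" "j < n" using Dset by auto
        then show "ij \<in> H \<times> H" using a sel_H[OF vs Npos ij(2,3), of "Suc m" w]
          unfolding H_def lev_def by auto
      qed
      then show ?thesis by (metis measure_Int_set_pmf measure_pmf.finite_measure_mono sets_measure_pmf UNIV_I)
    qed
    also have "\<dots> = measure_pmf.prob D H * measure_pmf.prob D H"
      by (rule measure_pmf_prob_product) auto
    also have "\<dots> \<le> ((real (\<Sum>i\<in>H. Nw i) / real Ntot) powr ((1 + \<epsilon>) / 2)) * ((real (\<Sum>i\<in>H. Nw i) / real Ntot) powr ((1 + \<epsilon>) / 2))"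
      using probH[OF Hsub] by (intro mult_mono) auto
    also have "\<dots> = (real (\<Sum>i\<in>H. Nw i) / real Ntot) powr (1 + \<epsilon>)"
      by (simp add: powr_add[symmetric])
    also have "\<dots> \<le> (real K / real Ntot) powr (1 + \<epsilon>)"
    proof -
      have "H = {i. i < n \<and> int (Suc m) * int (Nw i) \<le> int (w i)}"
        unfolding H_def lev_def using lev_iff[where n=n and Nw=Nw and w=w and c="int (Suc m)", OF Npos] by auto
      then have "int (\<Sum>i\<in>H. Nw i) \<le> dd P (int (Suc m))"
        using dd_H[where n=n and Nw=Nw and w=w and m="Suc m", OF Npos] unfolding P_def by simp
      then have "(\<Sum>i\<in>H. Nw i) \<le> K" unfolding K_def by linarith
      then show ?thesis using e0 by (intro powr_mono2 divide_right_mono) (auto simp del: of_nat_sum)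
    qed
    also have "\<dots> = phi Ntot \<epsilon> K" unfolding phi_def by simp
    also have "\<dots> = measure_pmf.prob (rank_pmf Ntot \<epsilon>) {k. k < Ntot \<and> K \<ge> k + 1}"
      using rank_prob[OF Ntot_pos e0 KN] by simp
    also have "\<dots> = measure_pmf.prob pB {Suc m..}"
    proof -
      have "{k. k < Ntot \<and> K \<ge> k + 1} \<inter> set_pmf (rank_pmf Ntot \<epsilon>) = (\<mu> -` {Suc m..}) \<inter> set_pmf (rank_pmf Ntot \<epsilon>)"
      proof (intro set_eqI iffI)
        fix k assume "k \<in> {k. k < Ntot \<and> K \<ge> k + 1} \<inter> set_pmf (rank_pmf Ntot \<epsilon>)"
        then have k: "k < Ntot" "K \<ge> k + 1" "k \<in> set_pmf (rank_pmf Ntot \<epsilon>)" by auto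
        have "int k + 1 \<le> dd P (int (Suc m))" using k(2) ddb unfolding K_def by linarith
        then have "int (Suc m) \<le> int (\<mu> k)" using mu[OF k(1)] by blast
        then show "k \<in> (\<mu> -` {Suc m..}) \<inter> set_pmf (rank_pmf Ntot \<epsilon>)" using k by auto
      next
        fix k assume a: "k \<in> (\<mu> -` {Suc m..}) \<inter> set_pmf (rank_pmf Ntot \<epsilon>)"
        then have k: "k < Ntot" using rs by auto
        have "int (Suc m) \<le> int (\<mu> k)" using a by auto
        then have "int k + 1 \<le> dd P (int (Suc m))" using mu[OF k] by blast
        then have "K \<ge> k + 1" unfolding K_def by linarith
        then show "k \<in> {k. k < Ntot \<and> K \<ge> k + 1} \<inter> set_pmf (rank_pmf Ntot \<epsilon>)" using a k by auto
      qed
      then have "measure_pmf.prob (rank_pmf Ntot \<epsilon>) ({k. k < Ntot \<and> K \<ge> k + 1} \<inter> set_pmf (rank_pmf Ntot \<epsilon>)) =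
          measure_pmf.prob (rank_pmf Ntot \<epsilon>) ((\<mu> -` {Suc m..}) \<inter> set_pmf (rank_pmf Ntot \<epsilon>))" by simp
      then have "measure_pmf.prob (rank_pmf Ntot \<epsilon>) {k. k < Ntot \<and> K \<ge> k + 1} =
          measure_pmf.prob (rank_pmf Ntot \<epsilon>) (\<mu> -` {Suc m..})" by (simp only: measure_Int_set_pmf)
      also have "\<dots> = measure_pmf.prob pB {Suc m..}" unfolding pB_def by (simp only: measure_map_pmf)
      finally show ?thesis .
    qed
    finally show ?thesis .
  qed
  show ?thesis unfolding LHS P_def[symmetric] RHS
    by (rule dom[OF monoF setA setB probs])
qed

end


lemma hh_sum: assumes "N > 0" "eps > 0"
  shows "hh N eps f P = (\<Sum>k<N. f (\<lambda>c. P c + ind P k c) * pmf (rank_pmf N eps) k)"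
  unfolding hh_def using rank_set[OF assms] by (intro integral_measure_pmf_real) auto

lemma ind_mono: assumes "\<And>c. P c \<le> Q c" shows "P c + ind P k c \<le> Q c + ind Q k c"
proof -
  have "P (c - 1) \<le> Q (c - 1)" "P c \<le> Q c" using assms by auto
  then show ?thesis unfolding ind_def dd_def by auto
qed

lemma good_hh: assumes "N > 0" "eps > 0" "good f" shows "good (hh N eps f)"
proof -
  have gf: "\<And>P Q. (\<forall>c. P c \<le> Q c) \<Longrightarrow> f P \<le> f Q" "\<And>P. 0 \<le> f P" "\<And>P. f P \<le> 1"
    using assms(3) unfolding good_def by auto
  have s1: "(\<Sum>k<N. pmf (rank_pmf N eps) k) = 1" using rank_set[OF assms(1,2)] by (intro sum_pmf_eq_1) auto
  show ?thesis unfolding good_def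
  proof (intro conjI allI impI)
    fix P Q :: "int \<Rightarrow> int" assume "\<forall>c. P c \<le> Q c"
    then have "\<And>k. f (\<lambda>c. P c + ind P k c) \<le> f (\<lambda>c. Q c + ind Q k c)"
      by (intro gf(1)) (auto intro: ind_mono)
    then show "hh N eps f P \<le> hh N eps f Q" unfolding hh_sum[OF assms(1,2)]
      by (intro sum_mono mult_right_mono) auto
  next
    fix P
    show "0 \<le> hh N eps f P" unfolding hh_sum[OF assms(1,2)] using gf(2) by (intro sum_nonneg) auto
    have "hh N eps f P \<le> (\<Sum>k<N. 1 * pmf (rank_pmf N eps) k)" unfolding hh_sum[OF assms(1,2)]
      using gf(3) by (intro sum_mono mult_right_mono) auto
    then show "hh N eps f P \<le> 1" using s1 by simp
  qed
qed

lemma stepB: assumes "N > 0" "eps > 0"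
  shows "measure_pmf.expectation (estep N eps x) (\<lambda>x'. f (prof N (\<lambda>_. 1) x')) = hh N eps f (prof N (\<lambda>_. 1) x)"
proof -
  have "map_pmf (prof N (\<lambda>_. 1)) (estep N eps x) = map_pmf (\<lambda>k c. prof N (\<lambda>_. 1) x c + ind (prof N (\<lambda>_. 1) x) k c) (rank_pmf N eps)"
    unfolding estep_def map_pmf_comp
    by (intro map_pmf_cong refl) (use rank_set[OF assms] profB_step in auto)
  then have "measure_pmf.expectation (map_pmf (prof N (\<lambda>_. 1)) (estep N eps x)) f =
     measure_pmf.expectation (map_pmf (\<lambda>k c. prof N (\<lambda>_. 1) x c + ind (prof N (\<lambda>_. 1) x) k c) (rank_pmf N eps)) f"
    by simp
  then show ?thesis unfolding hh_def by simp
qed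

lemma fin_estep: assumes "N > 0" "eps > 0" shows "finite (set_pmf (estep N eps x))"
  unfolding estep_def using rank_set[OF assms] by (auto intro: finite_subset)

lemma fin_eproc: assumes "N > 0" "eps > 0" shows "finite (set_pmf (eproc N eps t))"
  by (induction t) (auto simp: set_bind_pmf intro: fin_estep[OF assms])

context wloc begin

lemma fin_wstep: "finite (set_pmf (wstep D sel w))"
proof -
  have "finite (set_pmf D)" using Dset finite_subset by blast
  then show ?thesis unfolding wstep_pair by simp
qed

lemma fin_wproc: "finite (set_pmf (wproc D sel t))"
  by (induction t) (auto simp: set_bind_pmf intro: fin_wstep)

lemma main: "good f \<Longrightarrow> measure_pmf.expectation (wproc D sel t) (\<lambda>w. f (prof n Nw w))
   \<le> measure_pmf.expectation (eproc Ntot \<epsilon> t) (\<lambda>x. f (prof Ntot (\<lambda>_. 1) x))"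
proof (induction t arbitrary: f)
  case 0
  have "prof n Nw (\<lambda>_. 0) = prof Ntot (\<lambda>_. 1) (\<lambda>_. 0)"
  proof
    fix c :: int
    have e: "max 0 (0 - c * int (Nw i)) = int (Nw i) * max 0 (- c)" for i
    proof (cases "c \<le> 0")
      case True
      have "0 \<le> (- c) * int (Nw i)" using True by (intro mult_nonneg_nonneg) auto
      then show ?thesis using True by (simp add: max_def algebra_simps)
    next
      case False
      have "0 \<le> c * int (Nw i)" using False by (intro mult_nonneg_nonneg) auto
      then have "max 0 (0 - c * int (Nw i)) = 0" by simp
      moreover have "max 0 (- c) = 0" using False by simp
      ultimately show ?thesis by simp
    qed
    show "prof n Nw (\<lambda>_. 0) c = prof Ntot (\<lambda>_. 1) (\<lambda>_. 0) c"
      unfolding prof_def using e by (simp add: sum_distrib_right)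
  qed
  then show ?case by simp
next
  case (Suc t)
  let ?S = "set_pmf (wproc D sel t)"
  let ?T = "set_pmf (eproc Ntot \<epsilon> t)"
  have "measure_pmf.expectation (wproc D sel (Suc t)) (\<lambda>w. f (prof n Nw w))
      = (\<Sum>a\<in>?S. pmf (wproc D sel t) a * measure_pmf.expectation (wstep D sel a) (\<lambda>w. f (prof n Nw w)))"
    by (simp only: wproc.simps, subst pmf_expectation_bind[OF fin_wproc _ subset_refl]) (auto intro: fin_wstep)
  also have "\<dots> \<le> (\<Sum>a\<in>?S. pmf (wproc D sel t) a * hh Ntot \<epsilon> f (prof n Nw a))"
    by (intro sum_mono mult_left_mono stepA Suc.prems) auto
  also have "\<dots> = measure_pmf.expectation (wproc D sel t) (\<lambda>w. hh Ntot \<epsilon> f (prof n Nw w))"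
    by (subst integral_measure_pmf_real[OF fin_wproc]) (auto simp: mult.commute)
  also have "\<dots> \<le> measure_pmf.expectation (eproc Ntot \<epsilon> t) (\<lambda>x. hh Ntot \<epsilon> f (prof Ntot (\<lambda>_. 1) x))"
    by (rule Suc.IH[OF good_hh[OF Ntot_pos e0 Suc.prems]])
  also have "\<dots> = (\<Sum>a\<in>?T. pmf (eproc Ntot \<epsilon> t) a * hh Ntot \<epsilon> f (prof Ntot (\<lambda>_. 1) a))"
    by (subst integral_measure_pmf_real[OF fin_eproc[OF Ntot_pos e0]]) (auto simp: mult.commute)
  also have "\<dots> = (\<Sum>a\<in>?T. pmf (eproc Ntot \<epsilon> t) a * measure_pmf.expectation (estep Ntot \<epsilon> a) (\<lambda>x. f (prof Ntot (\<lambda>_. 1) x)))"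
    by (simp only: stepB[OF Ntot_pos e0])
  also have "\<dots> = measure_pmf.expectation (eproc Ntot \<epsilon> (Suc t)) (\<lambda>x. f (prof Ntot (\<lambda>_. 1) x))"
    by (simp only: eproc.simps, subst pmf_expectation_bind[OF fin_eproc[OF Ntot_pos e0] _ subset_refl])
       (auto intro: fin_estep[OF Ntot_pos e0])
  finally show ?case .
qed

end


lemma sum_upd: fixes w :: "nat \<Rightarrow> nat" shows "k < n \<Longrightarrow> (\<Sum>i<n. (w(k := Suc (w k))) i) = Suc (\<Sum>i<n. w i)"
proof -
  assume k: "k < n"
  have "(\<Sum>i<n. (w(k := Suc (w k))) i) = (w(k := Suc (w k))) k + (\<Sum>i\<in>{..<n}-{k}. (w(k := Suc (w k))) i)"
    using k sum.remove[where A="{..<n}" and x=k and g="w(k := Suc (w k))"] by simp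
  also have "(\<Sum>i\<in>{..<n}-{k}. (w(k := Suc (w k))) i) = (\<Sum>i\<in>{..<n}-{k}. w i)" by (intro sum.cong) auto
  also have "(\<Sum>i<n. w i) = w k + (\<Sum>i\<in>{..<n}-{k}. w i)"
    using k sum.remove[where A="{..<n}" and x=k and g=w] by simp
  ultimately show ?thesis by simp
qed

lemma eproc_sum: assumes "N > 0" "eps > 0" shows "x \<in> set_pmf (eproc N eps t) \<Longrightarrow> (\<Sum>j<N. x j) = t"
proof (induction t arbitrary: x)
  case 0 then show ?case by simp
next
  case (Suc t)
  then obtain y k where y: "y \<in> set_pmf (eproc N eps t)" "k \<in> set_pmf (rank_pmf N eps)"
    "x = (let b = sorted_bins N y ! k in y(b := Suc (y b)))"
    by (auto simp: set_bind_pmf estep_def)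
  then have k: "k < N" using rank_set[OF assms] by auto
  show ?case using y sum_upd[OF sb_in[OF k], of y] Suc.IH[OF y(1)] by (simp add: Let_def)
qed

context wloc begin

lemma wproc_sum: "w \<in> set_pmf (wproc D sel t) \<Longrightarrow> (\<Sum>i<n. w i) = t"
proof (induction t arbitrary: w)
  case 0 then show ?case by simp
next
  case (Suc t)
  then obtain y i j where y: "y \<in> set_pmf (wproc D sel t)" "i \<in> set_pmf D" "j \<in> set_pmf D"
    "w = (let k = sel y i j in y(k := Suc (y k)))"
    by (auto simp: set_bind_pmf wstep_pair)
  then have ij: "i < n" "j < n" using Dset by auto
  have "sel y i j < n" using vs ij unfolding valid_sel_def by (metis insert_iff singletonD)
  then show ?case using y sum_upd[of "sel y i j" n y] Suc.IH[OF y(1)] by (simp add: Let_def)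
qed

definition Wit :: "nat \<Rightarrow> real \<Rightarrow> (int \<Rightarrow> int) \<Rightarrow> bool" where
  "Wit t b P \<longleftrightarrow> (\<exists>lo hi. real_of_int (hi - lo) \<le> b \<and> P hi \<le> 0 \<and> P lo \<le> int t - int Ntot * lo)"

lemma gapB: assumes "(\<Sum>j<Ntot. x j) = t" "egap Ntot x \<le> b" shows "Wit t b (prof Ntot (\<lambda>_. 1) x)"
proof -
  let ?A = "x ` {..<Ntot}"
  have ne: "?A \<noteq> {}" using Ntot_pos by auto
  define hi where "hi = int (Max ?A)"
  define lo where "lo = int (Min ?A)"
  have le: "x j \<le> Max ?A" "Min ?A \<le> x j" if "j < Ntot" for j using that by auto
  have "prof Ntot (\<lambda>_. 1) x hi = 0" unfolding prof_def hi_def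
    by (intro sum.neutral) (auto dest: le)
  moreover have "prof Ntot (\<lambda>_. 1) x lo = int t - int Ntot * lo"
  proof -
    have "prof Ntot (\<lambda>_. 1) x lo = (\<Sum>j<Ntot. int (x j) - lo)" unfolding prof_def lo_def
      by (intro sum.cong) (auto dest: le)
    also have "\<dots> = int (\<Sum>j<Ntot. x j) - int Ntot * lo" by (simp add: sum_subtractf)
    finally show ?thesis using assms(1) by simp
  qed
  moreover have "real_of_int (hi - lo) \<le> b" using assms(2) unfolding egap_def hi_def lo_def by simp
  ultimately show ?thesis unfolding Wit_def by (intro exI[of _ lo] exI[of _ hi]) auto
qed

lemma gapA: assumes "(\<Sum>i<n. w i) = t" "Wit t b (prof n Nw w)" shows "wgap n Nw w \<le> b"
proof -
  obtain lo hi where W: "real_of_int (hi - lo) \<le> b" "prof n Nw w hi \<le> 0" "prof n Nw w lo \<le> int t - int Ntot * lo"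
    using assms(2) unfolding Wit_def by blast
  have up: "val Nw w i \<le> real_of_int hi" if i: "i < n" for i
  proof -
    have "\<forall>i\<in>{..<n}. max 0 (int (w i) - hi * int (Nw i)) = 0"
    proof -
      have "(\<Sum>i<n. max 0 (int (w i) - hi * int (Nw i))) = 0"
        using W(2) unfolding prof_def by (intro antisym sum_nonneg) auto
      then show ?thesis by (subst sum_nonneg_eq_0_iff[symmetric]) auto
    qed
    then have "max 0 (int (w i) - hi * int (Nw i)) = 0" using i by auto
    then have "int (w i) - hi * int (Nw i) \<le> 0" by (metis max.cobounded2)
    then have "int (w i) \<le> hi * int (Nw i)" by linarith
    then have "real (w i) \<le> real_of_int hi * real (Nw i)" by (metis of_int_of_nat_eq of_int_le_iff of_int_mult)
    then show ?thesis unfolding val_def using Npos[OF i] by (simp add: divide_le_eq)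
  qed
  have low: "real_of_int lo \<le> val Nw w i" if i: "i < n" for i
  proof -
    have "int t - int Ntot * lo = (\<Sum>i<n. int (w i) - lo * int (Nw i))"
    proof -
      have "int t = (\<Sum>i<n. int (w i))" using assms(1) by (metis of_nat_sum)
      then show ?thesis by (simp add: sum_subtractf sum_distrib_left algebra_simps)
    qed
    then have "(\<Sum>i<n. max 0 (int (w i) - lo * int (Nw i)) - (int (w i) - lo * int (Nw i))) \<le> 0"
      using W(3) unfolding prof_def by (simp add: sum_subtractf)
    then have "\<forall>i\<in>{..<n}. max 0 (int (w i) - lo * int (Nw i)) - (int (w i) - lo * int (Nw i)) = 0"
    proof -
      have "(\<Sum>i<n. max 0 (int (w i) - lo * int (Nw i)) - (int (w i) - lo * int (Nw i))) = 0"
        using \<open>(\<Sum>i<n. _) \<le> 0\<close> by (intro antisym sum_nonneg) auto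
      then show ?thesis by (subst sum_nonneg_eq_0_iff[symmetric]) auto
    qed
    then have "max 0 (int (w i) - lo * int (Nw i)) - (int (w i) - lo * int (Nw i)) = 0" using i by auto
    then have "0 \<le> int (w i) - lo * int (Nw i)" by (metis max.cobounded1 eq_iff_diff_eq_0)
    then have "lo * int (Nw i) \<le> int (w i)" by linarith
    then have "real_of_int lo * real (Nw i) \<le> real (w i)" by (metis of_int_of_nat_eq of_int_le_iff of_int_mult)
    then show ?thesis unfolding val_def using Npos[OF i] by (simp add: le_divide_eq)
  qed
  have "0 \<in> {..<n}" using n1 by simp
  then have ne: "{..<n} \<noteq> {}" by blast
  have "Max (val Nw w ` {..<n}) \<le> real_of_int hi" using ne up by (subst Max_le_iff) auto
  moreover have "real_of_int lo \<le> Min (val Nw w ` {..<n})" using ne low by (subst Min_ge_iff) auto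
  ultimately show ?thesis unfolding wgap_def using W(1) by simp
qed

end


lemma exp_ind: "measure_pmf.expectation p (\<lambda>x. if C x then 0 else 1::real) = 1 - measure_pmf.prob p {x. C x}"
proof -
  have "(\<lambda>x. if C x then 0 else 1::real) = indicator (UNIV - {x. C x})" by (auto simp: indicator_def)
  then have "measure_pmf.expectation p (\<lambda>x. if C x then 0 else 1::real) = measure_pmf.prob p (UNIV - {x. C x})" by simp
  also have "\<dots> = 1 - measure_pmf.prob p {x. C x}" using measure_pmf.prob_compl[of "{x. C x}" p] by simp
  finally show ?thesis .
qed

lemma prob_mono_supp: assumes "\<And>x. x \<in> set_pmf p \<Longrightarrow> x \<in> A \<Longrightarrow> x \<in> B"
  shows "measure_pmf.prob p A \<le> measure_pmf.prob p B"
proof -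
  have "measure_pmf.prob p (A \<inter> set_pmf p) \<le> measure_pmf.prob p B"
    using assms by (intro measure_pmf.finite_measure_mono) auto
  then show ?thesis by (simp add: measure_Int_set_pmf)
qed

theorem lemma1:
  fixes n :: nat and Nw :: "nat \<Rightarrow> nat" and D :: "nat pmf"
    and \<alpha> \<beta> \<epsilon> :: real and sel :: "(nat \<Rightarrow> nat) \<Rightarrow> nat \<Rightarrow> nat \<Rightarrow> nat"
  assumes "n \<ge> 1"
    and "\<And>i. i < n \<Longrightarrow> Nw i > 0"
    and "\<alpha> > 1" and "\<beta> > 1"
    and "biased n Nw \<alpha> \<beta> D"
    and "valid_sel Nw sel"
    and "0 < \<epsilon>"
    and "\<epsilon> \<le> 2 * ln ((\<alpha> * \<beta> - 1) / (\<alpha> * \<beta> - \<beta>)) / ln ((\<alpha> * \<beta> - 1) / (\<alpha> - 1)) - 1"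
  shows "\<forall>t. \<forall>b::real.
    measure_pmf.prob (eproc (\<Sum>i<n. Nw i) \<epsilon> t) {x. egap (\<Sum>i<n. Nw i) x \<le> b}
    \<le> measure_pmf.prob (wproc D sel t) {w. wgap n Nw w \<le> b}"
proof (intro allI)
  fix t and b :: real
  interpret wloc n Nw D \<alpha> \<beta> \<epsilon> sel using assms by unfold_locales auto
  define f0 where "f0 P = (if Wit t b P then 0 else 1::real)" for P
  have gf: "good f0" unfolding good_def f0_def Wit_def
    by (auto intro: order.trans) (meson order.trans)+
  have m: "measure_pmf.expectation (wproc D sel t) (\<lambda>w. f0 (prof n Nw w))
     \<le> measure_pmf.expectation (eproc Ntot \<epsilon> t) (\<lambda>x. f0 (prof Ntot (\<lambda>_. 1) x))"
    by (rule main[OF gf])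
  then have m2: "measure_pmf.prob (eproc Ntot \<epsilon> t) {x. Wit t b (prof Ntot (\<lambda>_. 1) x)}
     \<le> measure_pmf.prob (wproc D sel t) {w. Wit t b (prof n Nw w)}"
    unfolding f0_def exp_ind by simp
  have "measure_pmf.prob (eproc Ntot \<epsilon> t) {x. egap Ntot x \<le> b} \<le> measure_pmf.prob (eproc Ntot \<epsilon> t) {x. Wit t b (prof Ntot (\<lambda>_. 1) x)}"
    by (rule prob_mono_supp) (use gapB eproc_sum[OF Ntot_pos e0] in blast)
  also note m2
  also have "measure_pmf.prob (wproc D sel t) {w. Wit t b (prof n Nw w)} \<le> measure_pmf.prob (wproc D sel t) {w. wgap n Nw w \<le> b}"
    by (rule prob_mono_supp) (auto intro: gapA wproc_sum)
  finally show "measure_pmf.prob (eproc Ntot \<epsilon> t) {x. egap Ntot x \<le> b} \<le> measure_pmf.prob (wproc D sel t) {w. wgap n Nw w \<le> b}" .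
qed


end
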